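(* Let $V$ be a real vector space with basis $e^1,\dots,e^k$ and a nondegenerate symmetric bilinear form $q_1$ with Gram matrix $G=(G^{ab})$, $G^{ab}=q_1(e^a,e^b)$. For real $k\times k$ matrices $X,Y$ put $[X,Y]_G:=XGY-YGX$ and $\{X,Y\}_G:=XGY+YGX$. Let $X:\lambda\to\mathbb{R}^{k\times k}$ be a map taking values in symmetric matrices such that for all $\alpha,\beta\in\lambda$: $[X(\alpha),X(\beta)]_G=0$ if $(\alpha|\beta)=0$, and $\{X(\alpha),X(\beta)\}_G=\frac12 X(\alpha\pm\beta)$ if $(\alpha|\beta)=\mp1$ and $\alpha\pm\beta\in\lambda$. Let $\mathcal{S}$ be the Clifford algebra of $V\otimes S$ defined below, with elements $\phi^a_\gamma=e^a\otimes f_\gamma$, and put $$\widehat{J}(\alpha_i):=\sum_{a,b=1}^k\sum_{\gamma,\delta=1}^l X(\alpha_i)_{ab}\,\Gamma(\alpha_i)_{\gamma\delta}\,\phi^a_\gamma\phi^b_\delta\in\mathcal S.$$ Then the assignment $X_i\mapsto\widehat J(\alpha_i)$ extends to a Lie algebra homomorphism from $\mathfrak k$ into $\mathcal S$ (with bracket the commutator $uv-vu$), and hence defines a finite-dimensional representation $\sigma$ of $\mathfrak k$ with $\sigma(X_i)=\widehat J(\alpha_i)$.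
   Context: Let $A=(a_{ij})_{1\le i,j\le n}$ be a symmetrizable simply laced generalized Cartan matrix (off-diagonal entries $0$ or $-1$); the Dynkin diagram has an edge between $i\ne j$ iff $a_{ij}=-1$. Let $\mathfrak g$ be the split real Kac–Moody algebra of $A$ with Chevalley generators $e_i,f_i$, Cartan subalgebra $\mathfrak h$ (from a real realization), simple roots $\alpha_1,\dots,\alpha_n\in\mathfrak h^*$, and let $(\cdot|\cdot)$ be the nondegenerate invariant symmetric bilinear form induced on $\mathfrak h^*$, with $(\alpha_i|\alpha_j)=a_{ij}$. Let $\mathfrak k$ be the fixed-point subalgebra of the Chevalley involution ($e_i\mapsto -f_i$, $f_i\mapsto-e_i$, $h\mapsto -h$), with Berman generators $X_i=e_i-f_i$; $\mathfrak k$ is presented by generators $X_1,\dots,X_n$ and relations $[X_i,[X_i,X_j]]=-X_j$ if $a_{ij}=-1$, $[X_i,X_j]=0$ if $a_{ij}=0$. Let $\lambda$ be the set of real roots consisting of the simple roots $\alpha_1,\dots,\alpha_n$ together with all $\alpha_i+\alpha_j$ for $i,j$ forming an edge of the Dynkin diagram. A generalized spin representation is a representation $\rho$ of $\mathfrak k$ with $\rho(X_i)^2=-\frac14\mathrm{id}$ for all $i$. Fix a finite-dimensional real vector space $S$ with positive definite inner product $q_2$ and orthonormal basis $f_1,\dots,f_l$, and a generalized spin representation $\rho:\mathfrak k\to\mathrm{End}(S)$ whose values $\rho(X_i)$ are anti-symmetric real matrices with respect to this basis (such exist, e.g. by realifying the generalized spin representations with compact image constructed by Hainke–Köhl–Levy);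 put $\Gamma(\alpha_i):=2\rho(X_i)$, an anti-symmetric real $l\times l$ matrix with entries $\Gamma(\alpha_i)_{\gamma\delta}$. Let $q=q_1\otimes q_2$ be the symmetric bilinear form on $V\otimes S$ with $q(e^a\otimes f_\gamma,e^b\otimes f_\delta)=G^{ab}\delta_{\gamma\delta}$, and let $\mathcal S$ be the Clifford algebra: the tensor algebra of $V\otimes S$ modulo the ideal generated by $w\otimes w-\frac12 q(w,w)\cdot 1$, so that $vw+wv=q(v,w)$ in $\mathcal S$. *)

theory Defs
  imports "HOL-Analysis.Analysis"
begin

text \<open>Root lattice elements are written as integer coefficient vectors with respect
  to the simple roots (indexed by the finite type 'n).\<close>

definition simple_root :: "'n \<Rightarrow> ('n \<Rightarrow> int)" where
  "simple_root i = (\<lambda>j. if j = i then 1 else 0)"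

definition root_form :: "('n::finite \<Rightarrow> 'n \<Rightarrow> int) \<Rightarrow> ('n \<Rightarrow> int) \<Rightarrow> ('n \<Rightarrow> int) \<Rightarrow> int" where
  "root_form A c d = (\<Sum>i\<in>UNIV. \<Sum>j\<in>UNIV. c i * d j * A i j)"

definition simply_laced_GCM :: "('n \<Rightarrow> 'n \<Rightarrow> int) \<Rightarrow> bool" where
  "simply_laced_GCM A \<longleftrightarrow> (\<forall>i. A i i = 2) \<and> (\<forall>i j. i \<noteq> j \<longrightarrow> A i j = 0 \<or> A i j = -1)
     \<and> (\<forall>i j. A i j = A j i)"

definition lambda_roots :: "('n \<Rightarrow> 'n \<Rightarrow> int) \<Rightarrow> ('n \<Rightarrow> int) set" where
  "lambda_roots A = range simple_root \<union>
     {(\<lambda>m. simple_root i m + simple_root j m) | i j. i \<noteq> j \<and> A i j = -1}"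

text \<open>The defining relations of the Berman presentation of k, for images g i of the
  generators X_i in a structure with bracket br. A map from the generators extends to a
  Lie algebra homomorphism out of k (which is presented by these relations) exactly
  when these relations hold.\<close>
definition berman_relations ::
  "('n \<Rightarrow> 'n \<Rightarrow> int) \<Rightarrow> ('a \<Rightarrow> 'a \<Rightarrow> 'a::ab_group_add) \<Rightarrow> ('n \<Rightarrow> 'a) \<Rightarrow> bool" where
  "berman_relations A br g \<longleftrightarrow>
     (\<forall>i j. i \<noteq> j \<longrightarrow>
        (A i j = -1 \<longrightarrow> br (g i) (br (g i) (g j)) = - g j) \<and>
        (A i j = 0 \<longrightarrow> br (g i) (g j) = 0))"

definition mat_comm :: "real^'m^'m \<Rightarrow> real^'m^'m \<Rightarrow> real^'m^'m" where
  "mat_comm P Q = P ** Q - Q ** P"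

definition ring_comm :: "'a::ring \<Rightarrow> 'a \<Rightarrow> 'a" where
  "ring_comm u v = u * v - v * u"

definition G_bracket :: "real^'k^'k \<Rightarrow> real^'k^'k \<Rightarrow> real^'k^'k \<Rightarrow> real^'k^'k" where
  "G_bracket G P Q = P ** G ** Q - Q ** G ** P"

definition G_anticomm :: "real^'k^'k \<Rightarrow> real^'k^'k \<Rightarrow> real^'k^'k \<Rightarrow> real^'k^'k" where
  "G_anticomm G P Q = P ** G ** Q + Q ** G ** P"

text \<open>Generalized spin representation given by the images R i of the X_i, with
  antisymmetric matrices with respect to the orthonormal basis of S.\<close>
definition gen_spin_rep :: "('n \<Rightarrow> 'n \<Rightarrow> int) \<Rightarrow> ('n \<Rightarrow> real^'l^'l) \<Rightarrow> bool" where
  "gen_spin_rep A R \<longleftrightarrow> berman_relations A mat_comm R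
     \<and> (\<forall>i. R i ** R i = (- 1/4) *\<^sub>R mat 1)
     \<and> (\<forall>i. transpose (R i) = - R i)"

text \<open>The Clifford relations phi^a_gamma phi^b_delta + phi^b_delta phi^a_gamma
  = q(e^a (x) f_gamma, e^b (x) f_delta) = G^{ab} delta_{gamma delta}.\<close>
definition clifford_gens :: "real^'k^'k \<Rightarrow> ('k \<Rightarrow> 'l \<Rightarrow> 'c::real_algebra_1) \<Rightarrow> bool" where
  "clifford_gens G \<phi> \<longleftrightarrow> (\<forall>a b \<gamma> \<delta>.
     \<phi> a \<gamma> * \<phi> b \<delta> + \<phi> b \<delta> * \<phi> a \<gamma> = of_real (G $ a $ b * (if \<gamma> = \<delta> then 1 else 0)))"

definition J_hat :: "('n \<Rightarrow> int) \<Rightarrow> (('n \<Rightarrow> int) \<Rightarrow> real^'k^'k) \<Rightarrow> real^'l^'l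
     \<Rightarrow> ('k::finite \<Rightarrow> 'l::finite \<Rightarrow> 'c::real_algebra_1) \<Rightarrow> 'c" where
  "J_hat \<alpha> X Gam \<phi> = (\<Sum>a\<in>UNIV. \<Sum>b\<in>UNIV. \<Sum>\<gamma>\<in>UNIV. \<Sum>\<delta>\<in>UNIV.
      (X \<alpha> $ a $ b * Gam $ \<gamma> $ \<delta>) *\<^sub>R (\<phi> a \<gamma> * \<phi> b \<delta>))"

end

theory Submission
  imports Defs
begin

definition Qf :: "('u::finite \<Rightarrow> 'c::real_algebra_1) \<Rightarrow> ('u\<Rightarrow>'u\<Rightarrow>real) \<Rightarrow> 'c" where
  "Qf \<psi> M = (\<Sum>u\<in>UNIV. \<Sum>v\<in>UNIV. M u v  *\<^sub>R (\<psi> u  *  \<psi> v))"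
definition gprod :: "('u::finite\<Rightarrow>'u\<Rightarrow>real) \<Rightarrow> ('u\<Rightarrow>'u\<Rightarrow>real) \<Rightarrow> ('u\<Rightarrow>'u\<Rightarrow>real) \<Rightarrow> ('u\<Rightarrow>'u\<Rightarrow>real)" where
  "gprod g M N = (\<lambda>u x. \<Sum>v\<in>UNIV. \<Sum>w\<in>UNIV. M u v  *  g v w  *  N w x)"

lemma sum_perm_a: "(\<Sum>u\<in>UNIV. \<Sum>v\<in>UNIV. \<Sum>w\<in>UNIV. \<Sum>x\<in>UNIV. (F u v w x :: 'a::comm_monoid_add))
   = (\<Sum>u\<in>UNIV. \<Sum>x\<in>UNIV. \<Sum>v\<in>UNIV. \<Sum>w\<in>UNIV. F u v w x)"
proof (rule sum.cong[OF refl])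
  fix u
  have "(\<Sum>v\<in>UNIV. \<Sum>w\<in>UNIV. \<Sum>x\<in>UNIV. F u v w x) = (\<Sum>v\<in>UNIV. \<Sum>x\<in>UNIV. \<Sum>w\<in>UNIV. F u v w x)"
    by (rule sum.cong[OF refl], rule sum.swap)
  also have "\<dots> = (\<Sum>x\<in>UNIV. \<Sum>v\<in>UNIV. \<Sum>w\<in>UNIV. F u v w x)" by (rule sum.swap)
  finally show "(\<Sum>v\<in>UNIV. \<Sum>w\<in>UNIV. \<Sum>x\<in>UNIV. F u v w x) = (\<Sum>x\<in>UNIV. \<Sum>v\<in>UNIV. \<Sum>w\<in>UNIV. F u v w x)" .
qed

lemma p_S1: "(\<Sum>u\<in>UNIV. \<Sum>v\<in>UNIV. \<Sum>w\<in>UNIV. \<Sum>x\<in>UNIV. F u v w x) = (\<Sum>u\<in>UNIV. \<Sum>x\<in>UNIV. \<Sum>v\<in>UNIV. \<Sum>w\<in>UNIV. F u v w x)"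
proof -
  have "(\<Sum>u\<in>UNIV. \<Sum>v\<in>UNIV. \<Sum>w\<in>UNIV. \<Sum>x\<in>UNIV. F u v w x) = (\<Sum>u\<in>UNIV. \<Sum>v\<in>UNIV. \<Sum>x\<in>UNIV. \<Sum>w\<in>UNIV. F u v w x)" by (rule sum.cong[OF refl], rule sum.cong[OF refl], rule sum.swap)
  also have "\<dots> = (\<Sum>u\<in>UNIV. \<Sum>x\<in>UNIV. \<Sum>v\<in>UNIV. \<Sum>w\<in>UNIV. F u v w x)" by (rule sum.cong[OF refl], rule sum.swap)
  finally show ?thesis .
qed

lemma p_S2: "(\<Sum>u\<in>UNIV. \<Sum>v\<in>UNIV. \<Sum>w\<in>UNIV. \<Sum>x\<in>UNIV. F u v w x) = (\<Sum>v\<in>UNIV. \<Sum>x\<in>UNIV. \<Sum>u\<in>UNIV. \<Sum>w\<in>UNIV. F u v w x)"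
proof -
  have "(\<Sum>u\<in>UNIV. \<Sum>v\<in>UNIV. \<Sum>w\<in>UNIV. \<Sum>x\<in>UNIV. F u v w x) = (\<Sum>v\<in>UNIV. \<Sum>u\<in>UNIV. \<Sum>w\<in>UNIV. \<Sum>x\<in>UNIV. F u v w x)" by (rule sum.swap)
  also have "\<dots> = (\<Sum>v\<in>UNIV. \<Sum>u\<in>UNIV. \<Sum>x\<in>UNIV. \<Sum>w\<in>UNIV. F u v w x)" by (rule sum.cong[OF refl], rule sum.cong[OF refl], rule sum.swap)
  also have "\<dots> = (\<Sum>v\<in>UNIV. \<Sum>x\<in>UNIV. \<Sum>u\<in>UNIV. \<Sum>w\<in>UNIV. F u v w x)" by (rule sum.cong[OF refl], rule sum.swap)
  finally show ?thesis .
qed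

lemma p_S3: "(\<Sum>u\<in>UNIV. \<Sum>v\<in>UNIV. \<Sum>w\<in>UNIV. \<Sum>x\<in>UNIV. F u v w x) = (\<Sum>w\<in>UNIV. \<Sum>u\<in>UNIV. \<Sum>x\<in>UNIV. \<Sum>v\<in>UNIV. F u v w x)"
proof -
  have "(\<Sum>u\<in>UNIV. \<Sum>v\<in>UNIV. \<Sum>w\<in>UNIV. \<Sum>x\<in>UNIV. F u v w x) = (\<Sum>u\<in>UNIV. \<Sum>w\<in>UNIV. \<Sum>v\<in>UNIV. \<Sum>x\<in>UNIV. F u v w x)" by (rule sum.cong[OF refl], rule sum.swap)
  also have "\<dots> = (\<Sum>w\<in>UNIV. \<Sum>u\<in>UNIV. \<Sum>v\<in>UNIV. \<Sum>x\<in>UNIV. F u v w x)" by (rule sum.swap)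
  also have "\<dots> = (\<Sum>w\<in>UNIV. \<Sum>u\<in>UNIV. \<Sum>x\<in>UNIV. \<Sum>v\<in>UNIV. F u v w x)" by (rule sum.cong[OF refl], rule sum.cong[OF refl], rule sum.swap)
  finally show ?thesis .
qed

lemma p_S4: "(\<Sum>u\<in>UNIV. \<Sum>v\<in>UNIV. \<Sum>w\<in>UNIV. \<Sum>x\<in>UNIV. F u v w x) = (\<Sum>w\<in>UNIV. \<Sum>v\<in>UNIV. \<Sum>x\<in>UNIV. \<Sum>u\<in>UNIV. F u v w x)"
proof -
  have "(\<Sum>u\<in>UNIV. \<Sum>v\<in>UNIV. \<Sum>w\<in>UNIV. \<Sum>x\<in>UNIV. F u v w x) = (\<Sum>v\<in>UNIV. \<Sum>u\<in>UNIV. \<Sum>w\<in>UNIV. \<Sum>x\<in>UNIV. F u v w x)" by (rule sum.swap)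
  also have "\<dots> = (\<Sum>v\<in>UNIV. \<Sum>w\<in>UNIV. \<Sum>u\<in>UNIV. \<Sum>x\<in>UNIV. F u v w x)" by (rule sum.cong[OF refl], rule sum.swap)
  also have "\<dots> = (\<Sum>w\<in>UNIV. \<Sum>v\<in>UNIV. \<Sum>u\<in>UNIV. \<Sum>x\<in>UNIV. F u v w x)" by (rule sum.swap)
  also have "\<dots> = (\<Sum>w\<in>UNIV. \<Sum>v\<in>UNIV. \<Sum>x\<in>UNIV. \<Sum>u\<in>UNIV. F u v w x)" by (rule sum.cong[OF refl], rule sum.cong[OF refl], rule sum.swap)
  finally show ?thesis .
qed

lemma p_NM: "(\<Sum>u\<in>UNIV. \<Sum>v\<in>UNIV. \<Sum>w\<in>UNIV. \<Sum>x\<in>UNIV. F u v w x) = (\<Sum>w\<in>UNIV. \<Sum>x\<in>UNIV. \<Sum>u\<in>UNIV. \<Sum>v\<in>UNIV. F u v w x)"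
proof -
  have "(\<Sum>u\<in>UNIV. \<Sum>v\<in>UNIV. \<Sum>w\<in>UNIV. \<Sum>x\<in>UNIV. F u v w x) = (\<Sum>u\<in>UNIV. \<Sum>w\<in>UNIV. \<Sum>v\<in>UNIV. \<Sum>x\<in>UNIV. F u v w x)" by (rule sum.cong[OF refl], rule sum.swap)
  also have "\<dots> = (\<Sum>u\<in>UNIV. \<Sum>w\<in>UNIV. \<Sum>x\<in>UNIV. \<Sum>v\<in>UNIV. F u v w x)" by (rule sum.cong[OF refl], rule sum.cong[OF refl], rule sum.swap)
  also have "\<dots> = (\<Sum>w\<in>UNIV. \<Sum>u\<in>UNIV. \<Sum>x\<in>UNIV. \<Sum>v\<in>UNIV. F u v w x)" by (rule sum.swap)
  also have "\<dots> = (\<Sum>w\<in>UNIV. \<Sum>x\<in>UNIV. \<Sum>u\<in>UNIV. \<Sum>v\<in>UNIV. F u v w x)" by (rule sum.cong[OF refl], rule sum.swap)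
  finally show ?thesis .
qed


lemma cliffP:
  fixes \<psi> :: "'u \<Rightarrow> 'c::real_algebra_1"
  assumes cl: "\<And>p q. \<psi> p * \<psi> q + \<psi> q * \<psi> p = of_real (g p q)"
  shows "\<psi> u * \<psi> v * (\<psi> w * \<psi> x) - \<psi> w * \<psi> x * (\<psi> u * \<psi> v)
     = g v w *\<^sub>R (\<psi> u * \<psi> x) - g u w *\<^sub>R (\<psi> v * \<psi> x) + g v x *\<^sub>R (\<psi> w * \<psi> u) - g u x *\<^sub>R (\<psi> w * \<psi> v)"
proof -
  have e1: "(\<psi> v) * (\<psi> w) = of_real (g v w) - (\<psi> w) * (\<psi> v)" using cl[of v w] by (simp add: algebra_simps eq_diff_eq)
  have e2: "(\<psi> u) * (\<psi> w) = of_real (g u w) - (\<psi> w) * (\<psi> u)" using cl[of u w] by (simp add: algebra_simps eq_diff_eq)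
  have e3: "(\<psi> u) * (\<psi> x) = of_real (g u x) - (\<psi> x) * (\<psi> u)" using cl[of u x] by (simp add: algebra_simps eq_diff_eq)
  have e4: "(\<psi> v) * (\<psi> x) = of_real (g v x) - (\<psi> x) * (\<psi> v)" using cl[of v x] by (simp add: algebra_simps eq_diff_eq)
  have "(\<psi> u) * (\<psi> v) * ((\<psi> w) * (\<psi> x)) = (\<psi> u) * ((\<psi> v) * (\<psi> w)) * (\<psi> x)" by (simp add: mult.assoc)
  also have "\<dots> = g v w  *\<^sub>R ((\<psi> u) * (\<psi> x)) - ((\<psi> u) * (\<psi> w)) * ((\<psi> v) * (\<psi> x))" by (simp add: e1 algebra_simps of_real_def)
  also have "((\<psi> u) * (\<psi> w)) * ((\<psi> v) * (\<psi> x)) = g u w  *\<^sub>R ((\<psi> v) * (\<psi> x)) - (\<psi> w) * ((\<psi> u) * (\<psi> v)) * (\<psi> x)" by (simp add: e2 algebra_simps of_real_def)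
  also have "(\<psi> w) * ((\<psi> u) * (\<psi> v)) * (\<psi> x) = g v x  *\<^sub>R ((\<psi> w) * (\<psi> u)) - ((\<psi> w) * (\<psi> u)) * ((\<psi> x) * (\<psi> v))" by (simp add: e4 algebra_simps of_real_def)
  also have "((\<psi> w) * (\<psi> u)) * ((\<psi> x) * (\<psi> v)) = g u x *\<^sub>R ((\<psi> w) * (\<psi> v)) - (\<psi> w) * (\<psi> x) * ((\<psi> u) * (\<psi> v))"
  proof -
    have "((\<psi> w) * (\<psi> u)) * ((\<psi> x) * (\<psi> v)) = (\<psi> w) * ((\<psi> u) * (\<psi> x)) * (\<psi> v)" by (simp add: mult.assoc)
    then show ?thesis by (simp add: e3 algebra_simps of_real_def)
  qed
  finally show ?thesis by (simp add: algebra_simps)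
qed



lemma sw_wv: "(\<Sum>u\<in>UNIV. \<Sum>w\<in>UNIV. \<Sum>v\<in>UNIV. \<Sum>x\<in>UNIV. F u v w x) = (\<Sum>u\<in>UNIV. \<Sum>v\<in>UNIV. \<Sum>w\<in>UNIV. \<Sum>x\<in>UNIV. F u v w x)"
  by (rule sum.cong[OF refl], rule sum.swap)

lemma Qf_prod: "Qf \<psi> M * Qf \<psi> N = (\<Sum>u\<in>UNIV. \<Sum>v\<in>UNIV. \<Sum>w\<in>UNIV. \<Sum>x\<in>UNIV. (M u v * N w x) *\<^sub>R (\<psi> u * \<psi> v * (\<psi> w * \<psi> x)))"
  unfolding Qf_def sum_product mult_scaleR_left mult_scaleR_right scaleR_scaleR
  by (subst sw_wv[symmetric]) (simp add: mult.commute)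

lemma Qf_diff: "Qf \<psi> (\<lambda>u v. M u v - N u v) = Qf \<psi> M - Qf \<psi> N"
  unfolding Qf_def by (simp add: scaleR_left_diff_distrib sum_subtractf)

lemma Qf_scale: "Qf \<psi> (\<lambda>u v. c * M u v) = c *\<^sub>R Qf \<psi> M"
  unfolding Qf_def by (simp add: scaleR_sum_right)

lemma Qf_comm:
  fixes \<psi> :: "'u::finite \<Rightarrow> 'c::real_algebra_1"
  assumes cl: "\<And>p q. \<psi> p * \<psi> q + \<psi> q * \<psi> p = of_real (g p q)"
    and gs: "\<And>u v. g u v = g v u"
    and Ma: "\<And>u v. M u v = - M v u" and Na: "\<And>u v. N u v = - N v u"
  shows "Qf \<psi> M * Qf \<psi> N - Qf \<psi> N * Qf \<psi> M = 2 *\<^sub>R (Qf \<psi> (gprod g M N) - Qf \<psi> (gprod g N M))"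
proof -
  have L: "Qf \<psi> M * Qf \<psi> N = (\<Sum>u\<in>UNIV. \<Sum>v\<in>UNIV. \<Sum>w\<in>UNIV. \<Sum>x\<in>UNIV. (M u v * N w x) *\<^sub>R (\<psi> u * \<psi> v * (\<psi> w * \<psi> x)))"
    by (rule Qf_prod)
  have R0: "Qf \<psi> N * Qf \<psi> M = (\<Sum>w\<in>UNIV. \<Sum>x\<in>UNIV. \<Sum>u\<in>UNIV. \<Sum>v\<in>UNIV. (N w x * M u v) *\<^sub>R (\<psi> w * \<psi> x * (\<psi> u * \<psi> v)))"
    by (rule Qf_prod)
  have R: "Qf \<psi> N * Qf \<psi> M = (\<Sum>u\<in>UNIV. \<Sum>v\<in>UNIV. \<Sum>w\<in>UNIV. \<Sum>x\<in>UNIV. (M u v * N w x) *\<^sub>R (\<psi> w * \<psi> x * (\<psi> u * \<psi> v)))"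
  proof -
    have "(\<Sum>u\<in>UNIV. \<Sum>v\<in>UNIV. \<Sum>w\<in>UNIV. \<Sum>x\<in>UNIV. (M u v * N w x) *\<^sub>R (\<psi> w * \<psi> x * (\<psi> u * \<psi> v))) = (\<Sum>w\<in>UNIV. \<Sum>x\<in>UNIV. \<Sum>u\<in>UNIV. \<Sum>v\<in>UNIV. (M u v * N w x) *\<^sub>R (\<psi> w * \<psi> x * (\<psi> u * \<psi> v)))" by (rule p_NM)
    also have "\<dots> = Qf \<psi> N * Qf \<psi> M" unfolding R0 by (simp only: mult.commute)
    finally show ?thesis by simp
  qed
  have pw: "(M u v * N w x) *\<^sub>R (\<psi> u * \<psi> v * (\<psi> w * \<psi> x)) - (M u v * N w x) *\<^sub>R (\<psi> w * \<psi> x * (\<psi> u * \<psi> v))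
     = (M u v * g v w * N w x) *\<^sub>R (\<psi> u * \<psi> x) + (M v u * g u w * N w x) *\<^sub>R (\<psi> v * \<psi> x) - (N w x * g x v * M v u) *\<^sub>R (\<psi> w * \<psi> u) - (N w x * g x u * M u v) *\<^sub>R (\<psi> w * \<psi> v)" for u v w x
  proof -
    have "(M u v * N w x) *\<^sub>R (\<psi> u * \<psi> v * (\<psi> w * \<psi> x)) - (M u v * N w x) *\<^sub>R (\<psi> w * \<psi> x * (\<psi> u * \<psi> v))
      = (M u v * N w x) *\<^sub>R ((\<psi> u * \<psi> v * (\<psi> w * \<psi> x)) - (\<psi> w * \<psi> x * (\<psi> u * \<psi> v)))"
      by (simp only: scaleR_right_diff_distrib)
    also have "\<dots> = (M u v * N w x) *\<^sub>R (g v w *\<^sub>R (\<psi> u * \<psi> x) - g u w *\<^sub>R (\<psi> v * \<psi> x) + g v x *\<^sub>R (\<psi> w * \<psi> u) - g u x *\<^sub>R (\<psi> w * \<psi> v))"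
      by (rule arg_cong[where f="scaleR (M u v * N w x)"], rule cliffP[OF cl])
    finally show ?thesis by (simp add: Ma[of u v] gs[of x v] gs[of x u] algebra_simps)
  qed
  have D: "Qf \<psi> M * Qf \<psi> N - Qf \<psi> N * Qf \<psi> M = (\<Sum>u\<in>UNIV. \<Sum>v\<in>UNIV. \<Sum>w\<in>UNIV. \<Sum>x\<in>UNIV. (M u v * g v w * N w x) *\<^sub>R (\<psi> u * \<psi> x)) + (\<Sum>u\<in>UNIV. \<Sum>v\<in>UNIV. \<Sum>w\<in>UNIV. \<Sum>x\<in>UNIV. (M v u * g u w * N w x) *\<^sub>R (\<psi> v * \<psi> x)) - (\<Sum>u\<in>UNIV. \<Sum>v\<in>UNIV. \<Sum>w\<in>UNIV. \<Sum>x\<in>UNIV. (N w x * g x v * M v u) *\<^sub>R (\<psi> w * \<psi> u)) - (\<Sum>u\<in>UNIV. \<Sum>v\<in>UNIV. \<Sum>w\<in>UNIV. \<Sum>x\<in>UNIV. (N w x * g x u * M u v) *\<^sub>R (\<psi> w * \<psi> v))"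
    unfolding L R by (simp only: sum_subtractf[symmetric] pw) (simp only: sum.distrib sum_subtractf)
  have S1: "(\<Sum>u\<in>UNIV. \<Sum>v\<in>UNIV. \<Sum>w\<in>UNIV. \<Sum>x\<in>UNIV. (M u v * g v w * N w x) *\<^sub>R (\<psi> u * \<psi> x)) = Qf \<psi> (gprod g M N)"
    by (rule trans[OF p_S1]) (simp add: Qf_def gprod_def scaleR_sum_left)
  have S2: "(\<Sum>u\<in>UNIV. \<Sum>v\<in>UNIV. \<Sum>w\<in>UNIV. \<Sum>x\<in>UNIV. (M v u * g u w * N w x) *\<^sub>R (\<psi> v * \<psi> x)) = Qf \<psi> (gprod g M N)"
    by (rule trans[OF p_S2]) (simp add: Qf_def gprod_def scaleR_sum_left)
  have S3: "(\<Sum>u\<in>UNIV. \<Sum>v\<in>UNIV. \<Sum>w\<in>UNIV. \<Sum>x\<in>UNIV. (N w x * g x v * M v u) *\<^sub>R (\<psi> w * \<psi> u)) = Qf \<psi> (gprod g N M)"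
    by (rule trans[OF p_S3]) (simp add: Qf_def gprod_def scaleR_sum_left)
  have S4: "(\<Sum>u\<in>UNIV. \<Sum>v\<in>UNIV. \<Sum>w\<in>UNIV. \<Sum>x\<in>UNIV. (N w x * g x u * M u v) *\<^sub>R (\<psi> w * \<psi> v)) = Qf \<psi> (gprod g N M)"
    by (rule trans[OF p_S4]) (simp add: Qf_def gprod_def scaleR_sum_left)
  show ?thesis unfolding D S1 S2 S3 S4 by (simp add: scaleR_2 algebra_simps)
qed


definition psiF :: "('k \<Rightarrow> 'l \<Rightarrow> 'c) \<Rightarrow> 'k \<times> 'l \<Rightarrow> 'c" where
  "psiF \<phi> p = \<phi> (fst p) (snd p)"
definition gF :: "real^'k^'k \<Rightarrow> 'k \<times> 'l \<Rightarrow> 'k \<times> 'l \<Rightarrow> real" where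
  "gF G p q = G $ fst p $ fst q * (if snd p = snd q then 1 else 0)"
definition TF :: "real^'k^'k \<Rightarrow> real^'l^'l \<Rightarrow> 'k \<times> 'l \<Rightarrow> 'k \<times> 'l \<Rightarrow> real" where
  "TF X P p q = X $ fst p $ fst q * P $ snd p $ snd q"

lemma sum_pair: "(\<Sum>p\<in>(UNIV::('a::finite \<times> 'b::finite) set). f p) = (\<Sum>a\<in>UNIV. \<Sum>b\<in>UNIV. f (a,b))"
  by (simp add: UNIV_Times_UNIV[symmetric] sum.cartesian_product del: UNIV_Times_UNIV)

lemma gprod_T: "gprod (gF G) (TF X P) (TF Y Q) = TF ((X ** G) ** Y) (P ** Q)"
proof (intro ext)
  fix p q :: "'a::finite \<times> 'b::finite"
  obtain a \<gamma> where p: "p = (a,\<gamma>)" by (cases p)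
  obtain c \<epsilon> where q: "q = (c,\<epsilon>)" by (cases q)
  have "gprod (gF G) (TF X P) (TF Y Q) p q = (\<Sum>b\<in>UNIV. \<Sum>\<delta>\<in>UNIV. \<Sum>b'\<in>UNIV. \<Sum>\<delta>'\<in>UNIV.
     X$a$b * P$\<gamma>$\<delta> * (G$b$b' * (if \<delta> = \<delta>' then 1 else 0)) * (Y$b'$c * Q$\<delta>'$\<epsilon>))"
    unfolding gprod_def gF_def TF_def p q sum_pair by simp
  also have "\<dots> = (\<Sum>b\<in>UNIV. \<Sum>\<delta>\<in>UNIV. \<Sum>b'\<in>UNIV. X$a$b * P$\<gamma>$\<delta> * G$b$b' * (Y$b'$c * Q$\<delta>$\<epsilon>))"
    by (simp add: if_distrib if_distribR cong: if_cong)
  also have "\<dots> = TF ((X ** G) ** Y) (P ** Q) p q"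
    unfolding TF_def p q matrix_matrix_mult_def
    apply (simp add: sum_distrib_left sum_distrib_right)
    apply (rule trans[OF sum.swap])
    apply (rule sum.cong[OF refl])
    apply (rule trans[OF sum.swap])
    apply (rule sum.cong[OF refl])+
    apply (simp add: ac_simps)
    done
  finally show "gprod (gF G) (TF X P) (TF Y Q) p q = TF ((X ** G) ** Y) (P ** Q) p q" .
qed


lemma mm_diff_l: "((A::real^'n^'m) - B) ** (C::real^'p^'n) = A ** C - B ** C"
  by (simp add: matrix_matrix_mult_def vec_eq_iff sum_subtractf algebra_simps)
lemma mm_diff_r: "(A::real^'n^'m) ** ((B::real^'p^'n) - C) = A ** B - A ** C"
  by (simp add: matrix_matrix_mult_def vec_eq_iff sum_subtractf algebra_simps)
lemma mm_scale_l: "(c *\<^sub>R (A::real^'n^'m)) ** (B::real^'p^'n) = c *\<^sub>R (A ** B)"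
  by (simp add: matrix_matrix_mult_def vec_eq_iff scaleR_sum_right sum_distrib_left algebra_simps)
lemma mm_scale_r: "(A::real^'n^'m) ** (c *\<^sub>R (B::real^'p^'n)) = c *\<^sub>R (A ** B)"
  by (simp add: matrix_matrix_mult_def vec_eq_iff sum_distrib_left algebra_simps)
lemma mm_neg_l: "(- (A::real^'n^'m)) ** (B::real^'p^'n) = - (A ** B)"
  by (simp add: matrix_matrix_mult_def vec_eq_iff sum_negf)
lemma mm_neg_r: "(A::real^'n^'m) ** (- (B::real^'p^'n)) = - (A ** B)"
  by (simp add: matrix_matrix_mult_def vec_eq_iff sum_negf)

lemma spin_anti:
  fixes r s :: "real^'l^'l"
  assumes rr: "r ** r = (- 1/4) *\<^sub>R mat 1"
    and H: "mat_comm r (mat_comm r s) = - s"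
  shows "(2 *\<^sub>R s) ** (2 *\<^sub>R r) = - ((2 *\<^sub>R r) ** (2 *\<^sub>R s))"
proof -
  define Z where "Z = (r ** s) ** r"
  have "r ** (r ** s) - r ** (s ** r) - ((r ** s) ** r - (s ** r) ** r) = - s"
    using H unfolding mat_comm_def by (simp add: mm_diff_l mm_diff_r)
  moreover have "r ** (r ** s) = (- 1/4) *\<^sub>R s" by (simp add: matrix_mul_assoc rr mm_scale_l mm_neg_l)
  moreover have "(s ** r) ** r = (- 1/4) *\<^sub>R s" by (simp add: matrix_mul_assoc[symmetric] rr mm_scale_r mm_neg_r)
  moreover have "r ** (s ** r) = Z" by (simp add: Z_def matrix_mul_assoc)
  ultimately have E: "(- 1/4) *\<^sub>R s - Z - (Z - (- 1/4) *\<^sub>R s) = - s" unfolding Z_def by simp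
  have Zs: "Z = (1/4) *\<^sub>R s"
  proof (rule vec_eq_iff[THEN iffD2], intro allI, rule vec_eq_iff[THEN iffD2], intro allI)
    fix i j
    have "((- 1/4) *\<^sub>R s - Z - (Z - (- 1/4) *\<^sub>R s)) $ i $ j = (- s) $ i $ j" using E by simp
    then show "Z $ i $ j = ((1/4) *\<^sub>R s) $ i $ j" by simp
  qed
  have "s ** r = (mat 1 ** s) ** r" by simp
  also have "mat 1 = (-4) *\<^sub>R (r ** r)" by (simp add: rr)
  also have "(((-4) *\<^sub>R (r ** r)) ** s) ** r = (-4) *\<^sub>R (r ** Z)"
    by (simp add: Z_def mm_scale_l mm_neg_l matrix_mul_assoc)
  also have "\<dots> = - (r ** s)" by (simp add: Zs mm_scale_r)
  finally have "s ** r = - (r ** s)" .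
  then show ?thesis by (simp add: mm_scale_l mm_scale_r)
qed

lemma spin_comm:
  fixes r s :: "real^'l^'l"
  assumes H: "mat_comm r s = 0"
  shows "(2 *\<^sub>R r) ** (2 *\<^sub>R s) = (2 *\<^sub>R s) ** (2 *\<^sub>R r)"
  using H unfolding mat_comm_def by (simp add: mm_scale_l mm_scale_r)

lemma spin_sq:
  fixes r :: "real^'l^'l"
  assumes rr: "r ** r = (- 1/4) *\<^sub>R mat 1"
  shows "(2 *\<^sub>R r) ** (2 *\<^sub>R r) = - mat 1"
  by (simp add: mm_scale_l mm_scale_r rr)

lemma PPQ:
  fixes P Q :: "real^'l^'l"
  assumes PP: "P ** P = - mat 1" and an: "Q ** P = - (P ** Q)"
  shows "P ** (P ** Q) = - Q" and "(P ** Q) ** P = Q"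
proof -
  show "P ** (P ** Q) = - Q" by (simp add: matrix_mul_assoc PP mm_neg_l)
  have "(P ** Q) ** P = P ** (Q ** P)" by (simp add: matrix_mul_assoc)
  also have "\<dots> = Q" by (simp add: an mm_neg_r matrix_mul_assoc PP mm_neg_l)
  finally show "(P ** Q) ** P = Q" .
qed


lemma J_Q: "J_hat \<alpha> X P \<phi> = Qf (psiF \<phi>) (TF (X \<alpha>) P)"
  unfolding J_hat_def Qf_def TF_def psiF_def sum_pair
  apply simp
  apply (rule sum.cong[OF refl], rule sum.swap)
  done

lemma cliff_pair: "clifford_gens G \<phi> \<Longrightarrow> psiF \<phi> p * psiF \<phi> q + psiF \<phi> q * psiF \<phi> p = of_real (gF G p q)"
  by (simp add: clifford_gens_def psiF_def gF_def)

lemma sym_entry: "transpose X = X \<Longrightarrow> X $ b $ a = X $ a $ b"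
  by (drule arg_cong[where f="\<lambda>M. M $ a $ b"]) (simp add: transpose_def)

lemma anti_entry: "transpose X = - X \<Longrightarrow> X $ b $ a = - X $ a $ b"
  by (drule arg_cong[where f="\<lambda>M. M $ a $ b"]) (simp add: transpose_def)

lemma gF_sym: "transpose G = G \<Longrightarrow> gF G p q = gF G q p"
  unfolding gF_def using sym_entry[of G "fst p" "fst q"] by auto

lemma TF_anti: "transpose X = X \<Longrightarrow> transpose P = - P \<Longrightarrow> TF X P u v = - TF X P v u"
  unfolding TF_def using sym_entry[of X "fst u" "fst v"] anti_entry[of P "snd u" "snd v"] by simp

lemma comm_T:
  fixes \<phi> :: "'k::finite \<Rightarrow> 'l::finite \<Rightarrow> 'c::real_algebra_1"
  assumes cl: "clifford_gens G \<phi>" and Gs: "transpose G = G"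
    and Xs: "transpose X = X" and Ys: "transpose Y = Y"
    and Pa: "transpose P = - P" and Qa: "transpose Q = - Q"
  shows "ring_comm (Qf (psiF \<phi>) (TF X P)) (Qf (psiF \<phi>) (TF Y Q))
     = Qf (psiF \<phi>) (\<lambda>u v. 2 * (TF ((X ** G) ** Y) (P ** Q) u v - TF ((Y ** G) ** X) (Q ** P) u v))"
proof -
  have "ring_comm (Qf (psiF \<phi>) (TF X P)) (Qf (psiF \<phi>) (TF Y Q))
     = 2 *\<^sub>R (Qf (psiF \<phi>) (gprod (gF G) (TF X P) (TF Y Q)) - Qf (psiF \<phi>) (gprod (gF G) (TF Y Q) (TF X P)))"
    unfolding ring_comm_def
    by (rule Qf_comm[OF cliff_pair[OF cl] gF_sym[OF Gs] TF_anti[OF Xs Pa] TF_anti[OF Ys Qa]])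
  also have "\<dots> = Qf (psiF \<phi>) (\<lambda>u v. 2 * (TF ((X ** G) ** Y) (P ** Q) u v - TF ((Y ** G) ** X) (Q ** P) u v))"
    unfolding gprod_T Qf_scale Qf_diff by (rule refl)
  finally show ?thesis .
qed

lemma Qf_neg: "Qf \<psi> (\<lambda>u v. - M u v) = - Qf \<psi> M"
  unfolding Qf_def by (simp add: sum_negf)

lemma Qf_zero: "Qf \<psi> (\<lambda>u v. 0) = 0"
  unfolding Qf_def by simp

lemma delta_mult2: "(if b then x else 0) * (y::'a::semiring_1) = (if b then x * y else 0)" by simp
lemma sum_if_out: "(\<Sum>k\<in>S. if P then f k else (0::'a::comm_monoid_add)) = (if P then (\<Sum>k\<in>S. f k) else 0)" by simp
lemma root_form_simple: "root_form A (simple_root i) (simple_root j) = A i j"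
  unfolding root_form_def simple_root_def
  by (simp only: delta_mult2 mult_zero_left mult_1_left sum_if_out sum.delta finite UNIV_I if_True)

lemma root_form_sum_l: "root_form A (\<lambda>m. c m + d m) e = root_form A c e + root_form A d e"
  unfolding root_form_def by (simp add: algebra_simps sum.distrib)


theorem proposition3p5:
  fixes A :: "'n::finite \<Rightarrow> 'n \<Rightarrow> int"
    and G :: "real^'k^'k"
    and X :: "('n \<Rightarrow> int) \<Rightarrow> real^'k^'k"
    and R :: "'n \<Rightarrow> real^'l^'l"
    and \<phi> :: "'k \<Rightarrow> 'l \<Rightarrow> 'c::real_algebra_1"
  assumes A: "simply_laced_GCM A"
    and G_sym: "transpose G = G"
    and G_nondeg: "invertible G"
    and X_sym: "\<forall>\<alpha>\<in>lambda_roots A. transpose (X \<alpha>) = X \<alpha>"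
    and X_comm: "\<forall>\<alpha>\<in>lambda_roots A. \<forall>\<beta>\<in>lambda_roots A.
                   root_form A \<alpha> \<beta> = 0 \<longrightarrow> G_bracket G (X \<alpha>) (X \<beta>) = 0"
    and X_plus: "\<forall>\<alpha>\<in>lambda_roots A. \<forall>\<beta>\<in>lambda_roots A.
                   root_form A \<alpha> \<beta> = -1 \<and> (\<lambda>m. \<alpha> m + \<beta> m) \<in> lambda_roots A \<longrightarrow>
                   G_anticomm G (X \<alpha>) (X \<beta>) = (1/2) *\<^sub>R X ((\<lambda>m. \<alpha> m + \<beta> m))"
    and X_minus: "\<forall>\<alpha>\<in>lambda_roots A. \<forall>\<beta>\<in>lambda_roots A.
                   root_form A \<alpha> \<beta> = 1 \<and> (\<lambda>m. \<alpha> m - \<beta> m) \<in> lambda_roots A \<longrightarrow>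
                   G_anticomm G (X \<alpha>) (X \<beta>) = (1/2) *\<^sub>R X ((\<lambda>m. \<alpha> m - \<beta> m))"
    and R: "gen_spin_rep A R"
    and cliff: "clifford_gens G \<phi>"
  shows "berman_relations A ring_comm
           (\<lambda>i. J_hat (simple_root i) X (2 *\<^sub>R R i) \<phi>)"
proof -
  define \<Gamma> where "\<Gamma> i = 2 *\<^sub>R R i" for i :: 'n
  define \<psi> where "\<psi> = psiF \<phi>"
  define J where "J i = Qf \<psi> (TF (X (simple_root i)) (\<Gamma> i))" for i :: 'n
  have J_eq: "J_hat (simple_root i) X (2 *\<^sub>R R i) \<phi> = J i" for i :: 'n
    unfolding J_def \<Gamma>_def \<psi>_def by (rule J_Q)
  have Rb: "berman_relations A mat_comm R" and Rsq: "\<And>i. R i ** R i = (- 1/4) *\<^sub>R mat 1"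
    and Ra: "\<And>i. transpose (R i) = - R i"
    using R unfolding gen_spin_rep_def by auto
  have Ga: "transpose (\<Gamma> i) = - \<Gamma> i" for i :: 'n
    unfolding \<Gamma>_def by (simp add: transpose_scalar Ra)
  have Gsq: "\<Gamma> i ** \<Gamma> i = - mat 1" for i :: 'n
    unfolding \<Gamma>_def by (rule spin_sq[OF Rsq])
  have sr_in: "simple_root i \<in> lambda_roots A" for i :: 'n
    unfolding lambda_roots_def by auto
  have Xs: "transpose (X (simple_root i)) = X (simple_root i)" for i :: 'n
    using X_sym sr_in by blast
  have Aii: "A i i = 2" and Asym: "A i j = A j i" for i j :: 'n
    using A unfolding simply_laced_GCM_def by auto
  have commJ: "ring_comm (Qf \<psi> (TF X1 P)) (Qf \<psi> (TF Y1 Q))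
     = Qf \<psi> (\<lambda>u v. 2 * (TF ((X1 ** G) ** Y1) (P ** Q) u v - TF ((Y1 ** G) ** X1) (Q ** P) u v))"
    if "transpose X1 = X1" "transpose Y1 = Y1" "transpose P = - P" "transpose Q = - Q" for X1 Y1 P Q
    unfolding \<psi>_def by (rule comm_T[OF cliff G_sym that])
  show ?thesis
    unfolding berman_relations_def J_eq
  proof (intro allI impI conjI)
    fix i j :: 'n assume ij: "i \<noteq> j"
    {
      assume a0: "A i j = 0"
      have XX: "(X (simple_root i) ** G) ** X (simple_root j) = (X (simple_root j) ** G) ** X (simple_root i)"
        using X_comm[rule_format, OF sr_in[of i] sr_in[of j]] a0 unfolding root_form_simple G_bracket_def by auto
      have GG: "\<Gamma> i ** \<Gamma> j = \<Gamma> j ** \<Gamma> i"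
        unfolding \<Gamma>_def by (rule spin_comm) (use Rb ij a0 in \<open>auto simp: berman_relations_def\<close>)
      show "ring_comm (J i) (J j) = 0"
        unfolding J_def commJ[OF Xs Xs Ga Ga] XX GG by (simp add: Qf_zero)
    }
    {
      assume a1: "A i j = -1"
      define sij where "sij = (\<lambda>m. simple_root i m + simple_root j m)"
      have sij_in: "sij \<in> lambda_roots A" unfolding sij_def lambda_roots_def using ij a1 by blast
      have Xij_s: "transpose (X sij) = X sij" using X_sym sij_in by blast
      have XP: "(X (simple_root i) ** G) ** X (simple_root j) + (X (simple_root j) ** G) ** X (simple_root i) = (1/2) *\<^sub>R X sij"
        using X_plus[rule_format, OF sr_in[of i] sr_in[of j]] a1 sij_in unfolding root_form_simple G_anticomm_def sij_def by auto
      have rf1: "root_form A sij (simple_root i) = 1"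
        unfolding sij_def root_form_sum_l root_form_simple using Aii[of i] Asym[of i j] a1 by simp
      have diff: "(\<lambda>m. sij m - simple_root i m) = simple_root j" unfolding sij_def by simp
      have XM: "(X sij ** G) ** X (simple_root i) + (X (simple_root i) ** G) ** X sij = (1/2) *\<^sub>R X (simple_root j)"
        using X_minus[rule_format, OF sij_in sr_in[of i]] sr_in[of j] rf1 unfolding G_anticomm_def diff by auto
      have an: "\<Gamma> j ** \<Gamma> i = - (\<Gamma> i ** \<Gamma> j)"
        unfolding \<Gamma>_def by (rule spin_anti[OF Rsq]) (use Rb ij a1 in \<open>auto simp: berman_relations_def\<close>)
      have P1: "\<Gamma> i ** (\<Gamma> i ** \<Gamma> j) = - \<Gamma> j" and P2: "(\<Gamma> i ** \<Gamma> j) ** \<Gamma> i = \<Gamma> j"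
        using PPQ[OF Gsq an] by auto
      have Gij_a: "transpose (\<Gamma> i ** \<Gamma> j) = - (\<Gamma> i ** \<Gamma> j)"
        by (simp add: matrix_transpose_mul Ga mm_neg_l mm_neg_r an)
      have K: "ring_comm (J i) (J j) = Qf \<psi> (TF (X sij) (\<Gamma> i ** \<Gamma> j))"
        unfolding J_def commJ[OF Xs Xs Ga Ga]
      proof (rule arg_cong[where f="Qf \<psi>"], intro ext)
        fix u v :: "'k \<times> 'l"
        have e: "((X (simple_root j) ** G) ** X (simple_root i)) $ fst u $ fst v
           = (1/2) * X sij $ fst u $ fst v - ((X (simple_root i) ** G) ** X (simple_root j)) $ fst u $ fst v"
          using arg_cong[where f="\<lambda>M. M $ fst u $ fst v", OF XP] by simp
        show "2 * (TF ((X (simple_root i) ** G) ** X (simple_root j)) (\<Gamma> i ** \<Gamma> j) u v -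
                TF ((X (simple_root j) ** G) ** X (simple_root i)) (\<Gamma> j ** \<Gamma> i) u v)
              = TF (X sij) (\<Gamma> i ** \<Gamma> j) u v"
          unfolding TF_def an e by (simp add: algebra_simps)
      qed
      have "ring_comm (J i) (ring_comm (J i) (J j)) = Qf \<psi> (\<lambda>u v. - TF (X (simple_root j)) (\<Gamma> j) u v)"
        unfolding K unfolding J_def commJ[OF Xs Xij_s Ga Gij_a] P1 P2
      proof (rule arg_cong[where f="Qf \<psi>"], intro ext)
        fix u v :: "'k \<times> 'l"
        have e: "((X sij ** G) ** X (simple_root i)) $ fst u $ fst v
           = (1/2) * X (simple_root j) $ fst u $ fst v - ((X (simple_root i) ** G) ** X sij) $ fst u $ fst v"
          using arg_cong[where f="\<lambda>M. M $ fst u $ fst v", OF XM] by simp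
        show "2 * (TF ((X (simple_root i) ** G) ** X sij) (- \<Gamma> j) u v -
                TF ((X sij ** G) ** X (simple_root i)) (\<Gamma> j) u v)
              = - TF (X (simple_root j)) (\<Gamma> j) u v"
          unfolding TF_def e by (simp add: algebra_simps)
      qed
      then show "ring_comm (J i) (ring_comm (J i) (J j)) = - J j"
        unfolding J_def by (simp only: Qf_neg)
    }
  qed
qed

end
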